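(* Let $f_0(n)=1$ for odd $n$ and $f_0(n)=0$ for even $n$. Then for every $m\ge1$ and $1\le k\le n$, $c_m(n,k)$ equals the number of words of length $n-1$ over the alphabet $\{0,1,\ldots,m\}$ with exactly $k-1$ letters equal to $m$ that avoid runs of zeros of odd length (every maximal block of consecutive zeros has even length).
   Context: For $m\ge 1$, $f_m$ is the invert transform of $f_{m-1}$, i.e. $f_m(n)=f_{m-1}(n)+\sum_{i=1}^{n-1}f_{m-1}(i)f_m(n-i)$ for $n\ge1$. For $m\ge1$ the numbers $c_m(n,k)$, $0\le k\le n$, are defined by $c_m(0,0)=1$, $c_m(n,0)=0$ for $n\ge1$, and $c_m(n,k)=\sum_{i=1}^{n-k+1}f_{m-1}(i)\,c_m(n-i,k-1)$ for $1\le k\le n$. Words may be empty. *)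

theory Defs
  imports Main
begin

function invert :: "(nat \<Rightarrow> nat) \<Rightarrow> nat \<Rightarrow> nat" where
  "invert g n = (if n = 0 then 0 else g n + (\<Sum>i = 1..n-1. g i * invert g (n - i)))"
  by pat_completeness auto
termination by (relation "measure (\<lambda>(g, n). n)") auto

fun fseq :: "nat \<Rightarrow> nat \<Rightarrow> nat" where
  "fseq 0 n = (if odd n then 1 else 0)"
| "fseq (Suc m) n = invert (fseq m) n"

fun cgen :: "(nat \<Rightarrow> nat) \<Rightarrow> nat \<Rightarrow> nat \<Rightarrow> nat" where
  "cgen g n 0 = (if n = 0 then 1 else 0)"
| "cgen g n (Suc k) = (\<Sum>i = 1..n - k. g i * cgen g (n - i) k)"

definition cm :: "nat \<Rightarrow> nat \<Rightarrow> nat \<Rightarrow> nat" where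
  "cm m n k = cgen (fseq (m - 1)) n k"

definition no_odd_zero_runs :: "nat list \<Rightarrow> bool" where
  "no_odd_zero_runs w \<longleftrightarrow>
     (\<forall>i j. i \<le> j \<and> j < length w \<and> (\<forall>t. i \<le> t \<and> t \<le> j \<longrightarrow> w ! t = 0)
        \<and> (i = 0 \<or> w ! (i - 1) \<noteq> 0) \<and> (Suc j = length w \<or> w ! Suc j \<noteq> 0)
        \<longrightarrow> even (j - i + 1))"

end

theory Submission
  imports Defs
begin


fun ok :: "nat list \<Rightarrow> bool" where
  "ok [] = True"
| "ok (x # w) = (if x = 0 then (case w of [] \<Rightarrow> False | y # w' \<Rightarrow> y = 0 \<and> ok w') else ok w)"

lemma N_use: "no_odd_zero_runs w \<Longrightarrow> i \<le> j \<Longrightarrow> j < length w \<Longrightarrow> (\<forall>t. i \<le> t \<and> t \<le> j \<longrightarrow> w ! t = 0)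
  \<Longrightarrow> (i = 0 \<or> w ! (i - 1) \<noteq> 0) \<Longrightarrow> (Suc j = length w \<or> w ! Suc j \<noteq> 0) \<Longrightarrow> even (j - i + 1)"
  unfolding no_odd_zero_runs_def by blast

lemma N_nil: "no_odd_zero_runs []"
  unfolding no_odd_zero_runs_def by auto

lemma N_Cons_nz: assumes "x \<noteq> 0" shows "no_odd_zero_runs (x # w) = no_odd_zero_runs w"
proof
  assume H: "no_odd_zero_runs (x # w)"
  show "no_odd_zero_runs w" unfolding no_odd_zero_runs_def
  proof (intro allI impI, elim conjE)
    fix i j assume a: "i \<le> j" "j < length w" "\<forall>t. i \<le> t \<and> t \<le> j \<longrightarrow> w ! t = 0"
      "i = 0 \<or> w ! (i - 1) \<noteq> 0" "Suc j = length w \<or> w ! Suc j \<noteq> 0"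
    have z: "\<And>t. i \<le> t \<Longrightarrow> t \<le> j \<Longrightarrow> w ! t = 0" using a(3) by blast
    have "even (Suc j - Suc i + 1)"
      by (rule N_use[OF H, of "Suc i" "Suc j"]) (use a assms in \<open>auto simp: z nth_Cons' split: if_splits\<close>)
    then show "even (j - i + 1)" by simp
  qed
next
  assume H: "no_odd_zero_runs w"
  show "no_odd_zero_runs (x # w)" unfolding no_odd_zero_runs_def
  proof (intro allI impI, elim conjE)
    fix i j assume a: "i \<le> j" "j < length (x#w)" "\<forall>t. i \<le> t \<and> t \<le> j \<longrightarrow> (x#w) ! t = 0"
      "i = 0 \<or> (x#w) ! (i - 1) \<noteq> 0" "Suc j = length (x#w) \<or> (x#w) ! Suc j \<noteq> 0"
    have z: "\<And>t. i \<le> t \<Longrightarrow> t \<le> j \<Longrightarrow> (x#w) ! t = 0" using a(3) by blast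
    have i0: "i \<noteq> 0" using a(1,3) assms by (metis le_refl nth_Cons_0)
    have zw: "\<And>t. i - 1 \<le> t \<Longrightarrow> Suc t \<le> j \<Longrightarrow> w ! t = 0"
    proof -
      fix t assume "i - 1 \<le> t" "Suc t \<le> j"
      then have "i \<le> Suc t" by simp
      then show "w ! t = 0" using z[of "Suc t"] \<open>Suc t \<le> j\<close> by simp
    qed
    have "even ((j - 1) - (i - 1) + 1)"
      by (rule N_use[OF H, of "i - 1" "j - 1"]) (use a assms i0 in \<open>auto simp: zw nth_Cons' split: if_splits\<close>)
    then show "even (j - i + 1)" using i0 a(1) by simp
  qed
qed

lemma N_single0: "\<not> no_odd_zero_runs [0]"
  unfolding no_odd_zero_runs_def by (auto intro!: exI[where x=0])

lemma N_0nz: "y \<noteq> 0 \<Longrightarrow> \<not> no_odd_zero_runs (0 # y # w)"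
  unfolding no_odd_zero_runs_def by (auto intro!: exI[where x=0])

lemma N_00: "no_odd_zero_runs (0 # 0 # w) = no_odd_zero_runs w"
proof
  assume H: "no_odd_zero_runs (0 # 0 # w)"
  show "no_odd_zero_runs w" unfolding no_odd_zero_runs_def
  proof (intro allI impI, elim conjE)
    fix i j assume a: "i \<le> j" "j < length w" "\<forall>t. i \<le> t \<and> t \<le> j \<longrightarrow> w ! t = 0"
      "i = 0 \<or> w ! (i - 1) \<noteq> 0" "Suc j = length w \<or> w ! Suc j \<noteq> 0"
    have z: "\<And>t. i \<le> t \<Longrightarrow> t \<le> j \<Longrightarrow> w ! t = 0" using a(3) by blast
    show "even (j - i + 1)"
    proof (cases "i = 0")
      case True
      have "even (Suc (Suc j) - 0 + 1)"
        by (rule N_use[OF H, of "0" "Suc (Suc j)"]) (use a True in \<open>auto simp: z nth_Cons' split: if_splits\<close>)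
      then show ?thesis using True by simp
    next
      case False
      have "even (Suc (Suc j) - Suc (Suc i) + 1)"
        by (rule N_use[OF H, of "Suc (Suc i)" "Suc (Suc j)"]) (use a False in \<open>auto simp: z nth_Cons' split: if_splits\<close>)
      then show ?thesis by simp
    qed
  qed
next
  assume H: "no_odd_zero_runs w"
  show "no_odd_zero_runs (0 # 0 # w)" unfolding no_odd_zero_runs_def
  proof (intro allI impI, elim conjE)
    fix i j assume a: "i \<le> j" "j < length (0#0#w)" "\<forall>t. i \<le> t \<and> t \<le> j \<longrightarrow> (0#0#w) ! t = 0"
      "i = 0 \<or> (0#0#w) ! (i - 1) \<noteq> 0" "Suc j = length (0#0#w) \<or> (0#0#w) ! Suc j \<noteq> 0"
    have z: "\<And>t. i \<le> t \<Longrightarrow> t \<le> j \<Longrightarrow> (0#0#w) ! t = 0" using a(3) by blast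
    have i1: "i \<noteq> 1" using a(4) by auto
    have zw: "\<And>t. i - 2 \<le> t \<Longrightarrow> Suc (Suc t) \<le> j \<Longrightarrow> w ! t = 0"
    proof -
      fix t assume "i - 2 \<le> t" "Suc (Suc t) \<le> j"
      then have "i \<le> Suc (Suc t)" by simp
      then show "w ! t = 0" using z[of "Suc (Suc t)"] \<open>Suc (Suc t) \<le> j\<close> by simp
    qed
    show "even (j - i + 1)"
    proof (cases "i = 0")
      case True
      have j0: "j \<noteq> 0" using a(5) True by (cases j) auto
      show ?thesis
      proof (cases "j = 1")
        case True then show ?thesis using \<open>i = 0\<close> by simp
      next
        case False
        then obtain j' where jj: "j = Suc (Suc j')" using j0 by (cases j; cases "j - 1") auto
        have "even (j' - 0 + 1)"
          by (rule N_use[OF H, of "0" "j'"]) (use a True jj in \<open>auto simp: zw nth_Cons' split: if_splits\<close>)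
        then show ?thesis using True jj by simp
      qed
    next
      case False
      then obtain i' where ii: "i = Suc (Suc i')" using i1 by (cases i; cases "i - 1") auto
      then obtain j' where jj: "j = Suc (Suc j')" using a(1) by (cases j; cases "j - 1") auto
      have "even (j' - i' + 1)"
        by (rule N_use[OF H, of "i'" "j'"]) (use a ii jj in \<open>auto simp: zw nth_Cons' split: if_splits\<close>)
      then show ?thesis using ii jj by simp
    qed
  qed
qed

lemma N_ok: "no_odd_zero_runs w = ok w"
proof (induction w rule: ok.induct)
  case 1 then show ?case by (simp add: N_nil)
next
  case (2 x w)
  show ?case
  proof (cases "x = 0")
    case True
    show ?thesis
    proof (cases w)
      case Nil then show ?thesis using True N_single0 by simp
    next
      case (Cons y w')
      then show ?thesis using True 2 N_0nz N_00 by (cases "y = 0") auto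
    qed
  next
    case False then show ?thesis using 2 N_Cons_nz by simp
  qed
qed


lemma ok_app: "c \<noteq> 0 \<Longrightarrow> ok (u @ c # v) = (ok u \<and> ok v)"
proof (induction u rule: ok.induct)
  case 1 then show ?case by simp
next
  case (2 x w)
  then show ?case by (cases w) auto
qed

lemma app_c_inj: "c \<notin> set u \<Longrightarrow> c \<notin> set u' \<Longrightarrow> u @ c # v = u' @ c # v' \<Longrightarrow> u = u' \<and> v = v'"
proof (induction u arbitrary: u')
  case Nil then show ?case by (cases u') auto
next
  case (Cons a u) then show ?case by (cases u') auto
qed

definition W :: "nat set \<Rightarrow> nat \<Rightarrow> nat list set" where
  "W S L = {w. length w = L \<and> set w \<subseteq> S \<and> ok w}"

lemma finite_lists: "finite S \<Longrightarrow> finite {w. length w = L \<and> set w \<subseteq> S \<and> P w}"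
  by (rule finite_subset[OF _ finite_lists_length_eq[of S L]]) auto

lemma decomp:
  assumes "c \<noteq> 0" "c \<in> S" "\<And>u v. c \<notin> set u \<Longrightarrow> Q (u @ c # v) = R v"
  shows "{w. length w = L \<and> set w \<subseteq> S \<and> ok w \<and> c \<in> set w \<and> Q w} =
    (\<Union>p<L. (\<lambda>(u,v). u @ c # v) ` (W (S - {c}) p \<times> {v. length v = L - Suc p \<and> set v \<subseteq> S \<and> ok v \<and> R v}))"
  (is "?A = ?B")
proof
  show "?A \<subseteq> ?B"
  proof
    fix w assume "w \<in> ?A"
    then have w: "length w = L" "set w \<subseteq> S" "ok w" "c \<in> set w" "Q w" by auto
    obtain u v where uv: "w = u @ c # v" "c \<notin> set u" using split_list_first[OF w(4)] by blast
    have "length u < L" using uv w(1) by simp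
    moreover have "(u, v) \<in> W (S - {c}) (length u) \<times> {v. length v = L - Suc (length u) \<and> set v \<subseteq> S \<and> ok v \<and> R v}"
    proof -
      have o: "ok u" "ok v" using ok_app[OF assms(1)] uv(1) w(3) by auto
      have "set u \<subseteq> S - {c}" using uv w(2) by auto
      moreover have "set v \<subseteq> S" using uv w(2) by auto
      moreover have "length v = L - Suc (length u)" using uv w(1) by simp
      moreover have "R v" using assms(3)[OF uv(2)] uv(1) w(5) by simp
      ultimately show ?thesis using o unfolding W_def by simp
    qed
    ultimately show "w \<in> ?B"
    proof -
      assume lt: "length u < L" and mem: "(u, v) \<in> W (S - {c}) (length u) \<times> {v. length v = L - Suc (length u) \<and> set v \<subseteq> S \<and> ok v \<and> R v}"
      have "w \<in> (\<lambda>(u,v). u @ c # v) ` (W (S - {c}) (length u) \<times> {v. length v = L - Suc (length u) \<and> set v \<subseteq> S \<and> ok v \<and> R v})"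
        by (rule image_eqI[OF _ mem]) (simp add: uv(1))
      moreover have "length u \<in> {..<L}" using lt by simp
      ultimately show ?thesis by (rule UN_I[rotated])
    qed
  qed
next
  show "?B \<subseteq> ?A"
  proof
    fix w assume "w \<in> ?B"
    then obtain p where p': "p \<in> {..<L}" and
      wp: "w \<in> (\<lambda>(u,v). u @ c # v) ` (W (S - {c}) p \<times> {v. length v = L - Suc p \<and> set v \<subseteq> S \<and> ok v \<and> R v})"
      by (rule UN_E)
    from wp obtain x where x: "x \<in> W (S - {c}) p \<times> {v. length v = L - Suc p \<and> set v \<subseteq> S \<and> ok v \<and> R v}"
      and wx: "w = (\<lambda>(u,v). u @ c # v) x" by (rule imageE)
    obtain u v where xuv: "x = (u, v)" by (cases x)
    have p: "p < L" using p' by simp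
    have wuv: "w = u @ c # v" using wx xuv by simp
    have u: "u \<in> W (S - {c}) p" using x xuv by simp
    have v: "v \<in> {v. length v = L - Suc p \<and> set v \<subseteq> S \<and> ok v \<and> R v}" using x xuv by simp
    have u': "length u = p" "set u \<subseteq> S - {c}" "ok u" using u unfolding W_def by auto
    have v': "length v = L - Suc p" "set v \<subseteq> S" "ok v" "R v" using v by auto
    have "length w = L" using wuv u'(1) v'(1) p by simp
    moreover have "set w \<subseteq> S" using wuv u'(2) v'(2) assms(2) by auto
    moreover have "ok w" using wuv ok_app[OF assms(1)] u'(3) v'(3) by simp
    moreover have "c \<in> set w" using wuv by simp
    moreover have "Q w" using wuv assms(3)[of u v] u'(2) v'(4) by auto
    ultimately show "w \<in> ?A" by simp
  qed
qed

lemma card_decomp: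
  assumes "\<And>p. finite (A p)" "\<And>p. finite (B p)" "\<And>p u. u \<in> A p \<Longrightarrow> length u = p \<and> c \<notin> set u"
  shows "card (\<Union>p<L. (\<lambda>(u,v). u @ c # v) ` (A p \<times> B p)) = (\<Sum>p<L. card (A p) * card (B p))"
proof -
  have inj: "inj_on (\<lambda>(u,v). u @ c # v) (A p \<times> B p)" for p
  proof (rule inj_onI)
    fix x y assume x: "x \<in> A p \<times> B p" and y: "y \<in> A p \<times> B p"
      and e: "(\<lambda>(u,v). u @ c # v) x = (\<lambda>(u,v). u @ c # v) y"
    obtain u v where xuv: "x = (u, v)" by (cases x)
    obtain u' v' where yuv: "y = (u', v')" by (cases y)
    have "u \<in> A p" "u' \<in> A p" using x y xuv yuv by auto
    then have c1: "c \<notin> set u" and c2: "c \<notin> set u'" using assms(3)[of u p] assms(3)[of u' p] by auto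
    have e2: "u @ c # v = u' @ c # v'" using e unfolding xuv yuv by simp
    have "u = u' \<and> v = v'" by (rule app_c_inj[OF c1 c2 e2])
    then show "x = y" unfolding xuv yuv by simp
  qed
  have "card (\<Union>p<L. (\<lambda>(u,v). u @ c # v) ` (A p \<times> B p)) = (\<Sum>p<L. card ((\<lambda>(u,v). u @ c # v) ` (A p \<times> B p)))"
  proof (rule card_UN_disjoint)
    show "finite {..<L}" by simp
    show "\<forall>i\<in>{..<L}. finite ((\<lambda>(u, v). u @ c # v) ` (A i \<times> B i))"
      using finite_imageI[OF finite_cartesian_product[OF assms(1) assms(2)]] by blast
    show "\<forall>i\<in>{..<L}. \<forall>j\<in>{..<L}. i \<noteq> j \<longrightarrow>
      (\<lambda>(u, v). u @ c # v) ` (A i \<times> B i) \<inter> (\<lambda>(u, v). u @ c # v) ` (A j \<times> B j) = {}"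
    proof (intro ballI impI)
      fix i j assume "i \<in> {..<L}" "j \<in> {..<L}" "i \<noteq> j"
      show "(\<lambda>(u, v). u @ c # v) ` (A i \<times> B i) \<inter> (\<lambda>(u, v). u @ c # v) ` (A j \<times> B j) = {}"
      proof (rule ccontr)
        assume "(\<lambda>(u, v). u @ c # v) ` (A i \<times> B i) \<inter> (\<lambda>(u, v). u @ c # v) ` (A j \<times> B j) \<noteq> {}"
        then obtain w where w1: "w \<in> (\<lambda>(u, v). u @ c # v) ` (A i \<times> B i)"
          and w2: "w \<in> (\<lambda>(u, v). u @ c # v) ` (A j \<times> B j)" by blast
        from w1 obtain x where x: "x \<in> A i \<times> B i" "w = (\<lambda>(u, v). u @ c # v) x" by (rule imageE)
        from w2 obtain y where y: "y \<in> A j \<times> B j" "w = (\<lambda>(u, v). u @ c # v) y" by (rule imageE)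
        obtain u v where xuv: "x = (u, v)" by (cases x)
        obtain u' v' where yuv: "y = (u', v')" by (cases y)
        have uv: "u \<in> A i" "v \<in> B i" "u' \<in> A j" "v' \<in> B j" using x(1) y(1) xuv yuv by auto
        have e: "u @ c # v = u' @ c # v'" using x(2) y(2) xuv yuv by simp
        have "length u = i" "c \<notin> set u" "length u' = j" "c \<notin> set u'"
          using assms(3)[OF uv(1)] assms(3)[OF uv(3)] by auto
        then show False using app_c_inj[OF _ _ e] \<open>i \<noteq> j\<close> by auto
      qed
    qed
  qed
  also have "\<dots> = (\<Sum>p<L. card (A p) * card (B p))"
    using inj by (simp add: card_image card_cartesian_product)
  finally show ?thesis .
qed

lemma ok_rep: "ok (replicate L 0) = even L"
proof (induction L rule: nat_less_induct)
  case (1 n) show ?case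
  proof (cases n)
    case 0 then show ?thesis by simp
  next
    case (Suc n') then show ?thesis using 1 by (cases n') auto
  qed
qed

lemma sum_shift1: "(\<Sum>i=1..n. f i) = (\<Sum>p<n. f (Suc p) :: nat)"
  by (induction n) auto

lemma W0: "W {0..0} L = (if even L then {replicate L 0} else {})"
proof -
  have "w \<in> W {0..0} L \<longleftrightarrow> w = replicate L 0 \<and> even L" for w
  proof
    assume "w \<in> W {0..0} L"
    then have "length w = L" "set w \<subseteq> {0}" "ok w" unfolding W_def by auto
    then have "w = replicate L 0" by (metis replicate_length_same singletonD subsetD)
    then show "w = replicate L 0 \<and> even L" using \<open>ok w\<close> ok_rep by auto
  next
    assume "w = replicate L 0 \<and> even L" then show "w \<in> W {0..0} L" unfolding W_def using ok_rep by auto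
  qed
  then show ?thesis by auto
qed

lemma fseq_card: "fseq m (Suc L) = card (W {0..m} L)"
proof (induction m arbitrary: L)
  case 0 then show ?case using W0[of L] by auto
next
  case (Suc m)
  show ?case
  proof (induction L rule: less_induct)
    case (less L)
    have fin: "finite (W S p)" if "finite S" for S p
      unfolding W_def using finite_lists[OF that] by simp
    have "fseq (Suc m) (Suc L) = fseq m (Suc L) + (\<Sum>i=1..L. fseq m i * invert (fseq m) (Suc L - i))"
      by (subst fseq.simps, subst invert.simps) simp
    also have "(\<Sum>i=1..L. fseq m i * invert (fseq m) (Suc L - i)) = (\<Sum>p<L. fseq m (Suc p) * invert (fseq m) (L - p))"
      by (subst sum_shift1) simp
    also have "\<dots> = (\<Sum>p<L. card (W {0..m} p) * card (W {0..Suc m} (L - Suc p)))"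
    proof (rule sum.cong)
      fix p assume "p \<in> {..<L}"
      then have "L - p = Suc (L - Suc p)" "L - Suc p < L" by auto
      then show "fseq m (Suc p) * invert (fseq m) (L - p) = card (W {0..m} p) * card (W {0..Suc m} (L - Suc p))"
        using less[of "L - Suc p"] Suc.IH[of p] by (simp del: invert.simps)
    qed simp
    also have "\<dots> = card (\<Union>p<L. (\<lambda>(u,v). u @ Suc m # v) ` (W {0..m} p \<times> W {0..Suc m} (L - Suc p)))"
      by (rule card_decomp[symmetric]) (auto simp: fin, auto simp: W_def)
    also have "(\<Union>p<L. (\<lambda>(u,v). u @ Suc m # v) ` (W {0..m} p \<times> W {0..Suc m} (L - Suc p)))
      = {w. length w = L \<and> set w \<subseteq> {0..Suc m} \<and> ok w \<and> Suc m \<in> set w \<and> True}"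
    proof -
      have e: "{0..Suc m} - {Suc m} = {0..m}" by auto
      show ?thesis using decomp[of "Suc m" "{0..Suc m}" "\<lambda>_. True" "\<lambda>_. True" L]
        unfolding e W_def by simp
    qed
    finally have *: "fseq (Suc m) (Suc L) = card (W {0..m} L) +
       card {w. length w = L \<and> set w \<subseteq> {0..Suc m} \<and> ok w \<and> Suc m \<in> set w}"
      using Suc.IH by simp
    have "W {0..Suc m} L = W {0..m} L \<union> {w. length w = L \<and> set w \<subseteq> {0..Suc m} \<and> ok w \<and> Suc m \<in> set w}"
      unfolding W_def by (auto simp: le_Suc_eq)
    moreover have "card \<dots> = card (W {0..m} L) + card {w. length w = L \<and> set w \<subseteq> {0..Suc m} \<and> ok w \<and> Suc m \<in> set w}"
      by (rule card_Un_disjoint) (auto simp: fin W_def finite_lists)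
    ultimately show ?case using * by simp
  qed
qed


definition Cs :: "nat \<Rightarrow> nat \<Rightarrow> nat \<Rightarrow> nat list set" where
  "Cs m L k = {w. length w = L \<and> set w \<subseteq> {0..m} \<and> ok w \<and> length (filter (\<lambda>x. x = m) w) = k}"

lemma Cs_fin: "finite (Cs m L k)" unfolding Cs_def by (rule finite_lists) simp

lemma Cs_empty: "L < k \<Longrightarrow> Cs m L k = {}"
  unfolding Cs_def using length_filter_le by (auto, metis leD length_filter_le)

lemma cgen_card:
  assumes "m \<ge> 1"
  shows "cgen (fseq (m - 1)) (Suc L) (Suc k) = card (Cs m L k)"
proof (induction k arbitrary: L)
  case 0
  let ?g = "fseq (m - 1)"
  have "cgen ?g (Suc L) (Suc 0) = (\<Sum>i=1..Suc L. ?g i * (if Suc L - i = 0 then 1 else 0))"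
    by simp
  also have "\<dots> = (\<Sum>i\<in>{1..Suc L}. if i = Suc L then ?g i else 0)"
    by (rule sum.cong) auto
  also have "\<dots> = ?g (Suc L)" by simp
  also have "\<dots> = card (W {0..m - 1} L)" by (rule fseq_card)
  also have "W {0..m - 1} L = Cs m L 0"
  proof -
    have "set w \<subseteq> {0..m - 1} \<longleftrightarrow> set w \<subseteq> {0..m} \<and> length (filter (\<lambda>x. x = m) w) = 0" for w
    proof -
      have "set w \<subseteq> {0..m - 1} \<longleftrightarrow> set w \<subseteq> {0..m} \<and> (\<forall>x\<in>set w. x \<noteq> m)"
      proof
        assume "set w \<subseteq> {0..m - 1}" then show "set w \<subseteq> {0..m} \<and> (\<forall>x\<in>set w. x \<noteq> m)" using assms by force
      next
        assume h: "set w \<subseteq> {0..m} \<and> (\<forall>x\<in>set w. x \<noteq> m)"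
        show "set w \<subseteq> {0..m - 1}"
        proof
          fix x assume "x \<in> set w" then have "x \<le> m" "x \<noteq> m" using h by auto
          then show "x \<in> {0..m - 1}" by simp
        qed
      qed
      then show ?thesis by (simp add: filter_empty_conv)
    qed
    then show ?thesis unfolding W_def Cs_def by auto
  qed
  finally show ?case .
next
  case (Suc k)
  let ?g = "fseq (m - 1)"
  have fin: "finite (W S p)" if "finite S" for S p
    unfolding W_def using finite_lists[OF that] by simp
  have "cgen ?g (Suc L) (Suc (Suc k)) = (\<Sum>i=1..L - k. ?g i * cgen ?g (Suc L - i) (Suc k))"
    by simp
  also have "\<dots> = (\<Sum>p<L - k. ?g (Suc p) * cgen ?g (L - p) (Suc k))"
    by (subst sum_shift1) simp
  also have "\<dots> = (\<Sum>p<L - k. card (W {0..m - 1} p) * card (Cs m (L - Suc p) k))"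
  proof (rule sum.cong)
    fix p assume "p \<in> {..<L - k}"
    then have "L - p = Suc (L - Suc p)" by auto
    then show "?g (Suc p) * cgen ?g (L - p) (Suc k) = card (W {0..m - 1} p) * card (Cs m (L - Suc p) k)"
      using Suc.IH[of "L - Suc p"] fseq_card[of "m - 1" p] by simp
  qed simp
  also have "\<dots> = (\<Sum>p<L. card (W {0..m - 1} p) * card (Cs m (L - Suc p) k))"
  proof (rule sum.mono_neutral_left)
    show "finite {..<L}" by simp
    show "{..<L - k} \<subseteq> {..<L}" by auto
    show "\<forall>i\<in>{..<L} - {..<L - k}. card (W {0..m - 1} i) * card (Cs m (L - Suc i) k) = 0"
    proof
      fix i assume "i \<in> {..<L} - {..<L - k}"
      then have "L - Suc i < k" by auto
      then have "Cs m (L - Suc i) k = {}" by (rule Cs_empty)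
      then show "card (W {0..m - 1} i) * card (Cs m (L - Suc i) k) = 0" by simp
    qed
  qed
  also have "\<dots> = card (\<Union>p<L. (\<lambda>(u,v). u @ m # v) ` (W {0..m - 1} p \<times> Cs m (L - Suc p) k))"
  proof (rule card_decomp[symmetric])
    show "finite (W {0..m - 1} p)" for p by (simp add: fin)
    show "finite (Cs m (L - Suc p) k)" for p by (rule Cs_fin)
    fix p u assume "u \<in> W {0..m - 1} p"
    then have "length u = p" "set u \<subseteq> {0..m - 1}" unfolding W_def by auto
    moreover have "m \<notin> {0..m - 1}" using assms by auto
    ultimately show "length u = p \<and> m \<notin> set u" by blast
  qed
  also have "(\<Union>p<L. (\<lambda>(u,v). u @ m # v) ` (W {0..m - 1} p \<times> Cs m (L - Suc p) k))
      = {w. length w = L \<and> set w \<subseteq> {0..m} \<and> ok w \<and> m \<in> set w \<and> length (filter (\<lambda>x. x = m) w) = Suc k}"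
  proof -
    have e: "{0..m} - {m} = {0..m - 1}" using assms by auto
    have q: "\<And>u v. m \<notin> set u \<Longrightarrow> (length (filter (\<lambda>x. x = m) (u @ m # v)) = Suc k) = (length (filter (\<lambda>x. x = m) v) = k)"
    proof -
      fix u v :: "nat list" assume "m \<notin> set u"
      then have "filter (\<lambda>x. x = m) u = []" by (auto simp: filter_empty_conv)
      then show "(length (filter (\<lambda>x. x = m) (u @ m # v)) = Suc k) = (length (filter (\<lambda>x. x = m) v) = k)" by simp
    qed
    show ?thesis using decomp[of m "{0..m}" "\<lambda>w. length (filter (\<lambda>x. x = m) w) = Suc k"
          "\<lambda>v. length (filter (\<lambda>x. x = m) v) = k" L, OF _ _ q] assms
      unfolding e Cs_def by simp
  qed
  also have "\<dots> = Cs m L (Suc k)"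
  proof -
    have "length (filter (\<lambda>x. x = m) w) = Suc k \<Longrightarrow> m \<in> set w" for w
    proof -
      assume "length (filter (\<lambda>x. x = m) w) = Suc k"
      then have "filter (\<lambda>x. x = m) w \<noteq> []" by auto
      then show "m \<in> set w" by (auto simp: filter_empty_conv)
    qed
    then show ?thesis unfolding Cs_def by (intro Collect_cong iffI) (auto simp only:)
  qed
  finally show ?case .
qed

theorem corollary23:
  fixes m n k :: nat
  assumes "m \<ge> 1" and "1 \<le> k" and "k \<le> n"
  shows "cm m n k = card {w :: nat list. length w = n - 1 \<and> set w \<subseteq> {0..m}
            \<and> length (filter (\<lambda>x. x = m) w) = k - 1 \<and> no_odd_zero_runs w}"
proof -
  have n: "n = Suc (n - 1)" and k: "k = Suc (k - 1)" using assms by auto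
  have "cm m n k = cgen (fseq (m - 1)) (Suc (n - 1)) (Suc (k - 1))"
    unfolding cm_def using n k by metis
  also have "\<dots> = card (Cs m (n - 1) (k - 1))" by (rule cgen_card[OF assms(1)])
  also have "Cs m (n - 1) (k - 1) = {w :: nat list. length w = n - 1 \<and> set w \<subseteq> {0..m}
            \<and> length (filter (\<lambda>x. x = m) w) = k - 1 \<and> no_odd_zero_runs w}"
    unfolding Cs_def N_ok by (rule Collect_cong) auto
  finally show ?thesis .
qed

end
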